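(* Let $G$ be a connected weighted multigraph on the vertex set $V$, $|V|=n\ge2$, with positive edge weights, weighted adjacency matrix $A$, spectral radius $\rho$ and Perron vector $p=(p_1,\dots,p_n)^{\mathsf T}$, and let $\Lambda=\rho I-A$. For $j\in V$ let $\bar Y(j)$ be the $n\times n$ matrix obtained from $(\Lambda_{jj})^{-1}$ by inserting a zero row $j$ and a zero column $j$, and let $\bar Y(j)^i$ denote its column indexed by $i$. Then for all distinct $i,j\in V$, the vector $\bar Y(j)^i\,p_j+\bar Y(i)^j\,p_i$ is a positive multiple of $p$.
   Context: $A=(a_{ij})$ has $a_{ij}$ equal to the sum of weights of the edges joining $i$ and $j$ (loops, multiple edges allowed). The Perron vector $p$ is the positive eigenvector of $A$ for $\rho$ with entries summing to 1. $\Lambda_{jj}$ is $\Lambda$ with row and column $j$ deleted (rows and columns indexed by $V\setminus\{j\}$); it is invertible. *)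

theory Defs
  imports "HOL-Analysis.Analysis"
begin

text \<open>Vertex set V is a finite type 'n; a weighted multigraph is represented by its
weighted adjacency matrix A (a_ij = sum of weights of edges joining i and j).\<close>

definition weighted_multigraph_adj :: "real^'n^'n \<Rightarrow> bool" where
  "weighted_multigraph_adj A \<longleftrightarrow> (\<forall>i j. A$i$j = A$j$i) \<and> (\<forall>i j. 0 \<le> A$i$j)"

definition connected_adj :: "real^'n^'n \<Rightarrow> bool" where
  "connected_adj A \<longleftrightarrow> (\<forall>i j. (i, j) \<in> {(x, y). A$x$y > 0}\<^sup>*)"

definition complex_eigenvalue :: "real^'n^'n \<Rightarrow> complex \<Rightarrow> bool" where
  "complex_eigenvalue A z \<longleftrightarrow>
     (\<exists>v :: complex^'n. v \<noteq> 0 \<and> (\<chi> i j. complex_of_real (A$i$j)) *v v = z *s v)"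

definition spectral_radius :: "real^'n^'n \<Rightarrow> real" where
  "spectral_radius A = Max {cmod z | z. complex_eigenvalue A z}"

definition Ybar :: "real^'n^'n \<Rightarrow> 'n \<Rightarrow> real^'n^'n" where
  "Ybar M j = (THE Y. (\<forall>k l. (k = j \<or> l = j) \<longrightarrow> Y$k$l = 0) \<and>
      (\<forall>k l. k \<noteq> j \<longrightarrow> l \<noteq> j \<longrightarrow>
         (\<Sum>m\<in>UNIV - {j}. M$k$m * Y$m$l) = (if k = l then 1 else 0) \<and>
         (\<Sum>m\<in>UNIV - {j}. Y$k$m * M$m$l) = (if k = l then 1 else 0)))"

end

theory Submission
  imports Defs
begin

lemma mv_comp: "(M *v x) $ k = (\<Sum>l\<in>UNIV. M$k$l * x$l)"
  by (simp add: matrix_vector_mult_def)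

locale LS =
  fixes A :: "real^'n^'n" and \<rho> :: real and p :: "real^'n"
  assumes sym: "\<And>i j. A$i$j = A$j$i" and nonneg: "\<And>i j. 0 \<le> A$i$j"
    and conn: "connected_adj A" and pos: "\<And>k. p$k > 0" and eig: "A *v p = \<rho> *\<^sub>R p"
begin

definition L where "L = \<rho> *\<^sub>R mat 1 - A"

lemma L_comp: "(L *v x) $ k = \<rho> * x$k - (\<Sum>l\<in>UNIV. A$k$l * x$l)"
proof -
  have "((\<rho> *\<^sub>R mat 1) *v x)$k = (\<Sum>l\<in>UNIV. (if k = l then \<rho> * x$l else 0))"
    unfolding mv_comp by (intro sum.cong refl) (simp add: mat_def)
  also have "\<dots> = \<rho> * x$k" by simp
  finally show ?thesis unfolding L_def matrix_vector_mult_diff_rdistrib by (simp add: mv_comp)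
qed

lemma rowsum: "(\<Sum>l\<in>UNIV. A$k$l * p$l) = \<rho> * p$k"
proof -
  have "(A *v p)$k = (\<rho> *\<^sub>R p)$k" using eig by simp
  then show ?thesis by (simp add: mv_comp)
qed

lemma pk: "p$k \<noteq> 0" using pos[of k] by simp

definition Q where "Q x = (\<Sum>k\<in>UNIV. x$k * (L *v x)$k)"

lemma Q_eq: "Q x = (\<Sum>k\<in>UNIV. \<Sum>l\<in>UNIV. A$k$l * p$k * p$l * (x$k/p$k - x$l/p$l)^2) / 2"
proof -
  have T1: "(\<Sum>k\<in>UNIV. \<Sum>l\<in>UNIV. A$k$l * p$k * p$l * (x$k/p$k)^2) = \<rho> * (\<Sum>k\<in>UNIV. x$k^2)"
  proof -
    have "(\<Sum>l\<in>UNIV. A$k$l * p$k * p$l * (x$k/p$k)^2) = \<rho> * x$k^2" for k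
    proof -
      have "(\<Sum>l\<in>UNIV. A$k$l * p$k * p$l * (x$k/p$k)^2) = (x$k^2/p$k) * (\<Sum>l\<in>UNIV. A$k$l * p$l)"
        unfolding sum_distrib_left by (intro sum.cong refl) (simp add: power2_eq_square field_simps pk)
      also have "\<dots> = \<rho> * x$k^2" using rowsum[of k] pk[of k] by (simp add: field_simps power2_eq_square)
      finally show ?thesis .
    qed
    then show ?thesis by (simp add: sum_distrib_left)
  qed
  have T3: "(\<Sum>k\<in>UNIV. \<Sum>l\<in>UNIV. A$k$l * p$k * p$l * (x$l/p$l)^2) = \<rho> * (\<Sum>k\<in>UNIV. x$k^2)"
  proof -
    have "(\<Sum>k\<in>UNIV. \<Sum>l\<in>UNIV. A$k$l * p$k * p$l * (x$l/p$l)^2)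
        = (\<Sum>l\<in>UNIV. \<Sum>k\<in>UNIV. A$l$k * p$l * p$k * (x$l/p$l)^2)"
      by (subst sum.swap) (simp add: sym mult_ac)
    then show ?thesis using T1 by simp
  qed
  have T2: "(\<Sum>k\<in>UNIV. \<Sum>l\<in>UNIV. A$k$l * p$k * p$l * ((x$k/p$k) * (x$l/p$l))) = (\<Sum>k\<in>UNIV. \<Sum>l\<in>UNIV. A$k$l * x$k * x$l)"
    by (intro sum.cong refl) (simp add: field_simps pk)
  have E: "Q x = \<rho> * (\<Sum>k\<in>UNIV. x$k^2) - (\<Sum>k\<in>UNIV. \<Sum>l\<in>UNIV. A$k$l * x$k * x$l)"
    unfolding Q_def L_comp by (simp add: algebra_simps sum_subtractf sum_distrib_left power2_eq_square)
  have "(\<Sum>k\<in>UNIV. \<Sum>l\<in>UNIV. A$k$l * p$k * p$l * (x$k/p$k - x$l/p$l)^2)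
     = (\<Sum>k\<in>UNIV. \<Sum>l\<in>UNIV. A$k$l * p$k * p$l * (x$k/p$k)^2 - 2 * (A$k$l * p$k * p$l * ((x$k/p$k) * (x$l/p$l))) + A$k$l * p$k * p$l * (x$l/p$l)^2)"
    by (intro sum.cong refl) (simp add: power2_diff algebra_simps)
  also have "\<dots> = (\<Sum>k\<in>UNIV. \<Sum>l\<in>UNIV. A$k$l * p$k * p$l * (x$k/p$k)^2) - 2 * (\<Sum>k\<in>UNIV. \<Sum>l\<in>UNIV. A$k$l * p$k * p$l * ((x$k/p$k) * (x$l/p$l))) + (\<Sum>k\<in>UNIV. \<Sum>l\<in>UNIV. A$k$l * p$k * p$l * (x$l/p$l)^2)"
    by (simp add: sum.distrib sum_subtractf sum_distrib_left)
  finally show ?thesis unfolding E T1 T2 T3 by simp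
qed

lemma tn: "0 \<le> A$k$l * p$k * p$l * (x$k/p$k - x$l/p$l)^2"
  using nonneg[of k l] pos[of k] pos[of l] by simp

lemma Q_nonneg: "Q x \<ge> 0"
  unfolding Q_eq by (intro divide_nonneg_pos sum_nonneg tn) auto

lemma Q_zero: assumes "Q x = 0" shows "\<exists>c. x = c *\<^sub>R p"
proof -
  have "(\<Sum>k\<in>UNIV. \<Sum>l\<in>UNIV. A$k$l * p$k * p$l * (x$k/p$k - x$l/p$l)^2) = 0"
    using assms Q_eq by simp
  note S = this
  have terms: "A$k$l * p$k * p$l * (x$k/p$k - x$l/p$l)^2 = 0" for k l
  proof -
    have "\<forall>k\<in>UNIV. (\<Sum>l\<in>UNIV. A$k$l * p$k * p$l * (x$k/p$k - x$l/p$l)^2) = 0"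
      using S by (subst (asm) sum_nonneg_eq_0_iff) (auto intro!: sum_nonneg tn)
    then show ?thesis by (simp add: sum_nonneg_eq_0_iff tn)
  qed
  have edge: "A$k$l > 0 \<Longrightarrow> x$k/p$k = x$l/p$l" for k l
    using terms[of k l] pk[of k] pk[of l] by auto
  have R: "(k, l) \<in> {(x,y). A$x$y>0}\<^sup>* \<Longrightarrow> x$k/p$k = x$l/p$l" for k l
    by (induction rule: rtrancl_induct) (auto dest: edge)
  define k0 :: 'n where "k0 = undefined"
  have "x = (x$k0/p$k0) *\<^sub>R p"
  proof (subst vec_eq_iff, intro allI)
    fix k
    have "x$k/p$k = x$k0/p$k0" using R conn unfolding connected_adj_def by metis
    then show "x$k = ((x$k0/p$k0) *\<^sub>R p)$k" using pk[of k] by (simp add: field_simps)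
  qed
  then show ?thesis by blast
qed


lemma K: assumes "x$j = 0" "\<And>k. k \<noteq> j \<Longrightarrow> (L *v x)$k = 0" shows "x = 0"
proof -
  have "Q x = 0" unfolding Q_def by (rule sum.neutral) (metis assms mult_zero_left mult_zero_right)
  then obtain c where c: "x = c *\<^sub>R p" using Q_zero by blast
  then have "c * p$j = 0" using assms(1) by simp
  then have "c = 0" using pk[of j] by simp
  with c show ?thesis by simp
qed

lemma pL: "(\<Sum>k\<in>UNIV. p$k * (L *v x)$k) = 0"
proof -
  have "(\<Sum>k\<in>UNIV. p$k * (L *v x)$k) = \<rho> * (\<Sum>k\<in>UNIV. p$k * x$k) - (\<Sum>k\<in>UNIV. \<Sum>l\<in>UNIV. p$k * A$k$l * x$l)"
    by (simp add: L_comp algebra_simps sum_subtractf sum_distrib_left)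
  also have "(\<Sum>k\<in>UNIV. \<Sum>l\<in>UNIV. p$k * A$k$l * x$l) = (\<Sum>l\<in>UNIV. x$l * (\<Sum>k\<in>UNIV. A$l$k * p$k))"
    by (subst sum.swap) (simp add: sum_distrib_left sym mult_ac)
  also have "\<dots> = (\<Sum>l\<in>UNIV. x$l * (\<rho> * p$l))" by (simp only: rowsum)
  also have "\<dots> = \<rho> * (\<Sum>k\<in>UNIV. p$k * x$k)" by (simp add: sum_distrib_left mult_ac)
  finally show ?thesis by simp
qed

lemma Ybar_prop:
  "(\<forall>k l. (k = j \<or> l = j) \<longrightarrow> Ybar L j$k$l = 0) \<and>
   (\<forall>k l. k \<noteq> j \<longrightarrow> l \<noteq> j \<longrightarrow> (\<Sum>m\<in>UNIV - {j}. L$k$m * Ybar L j$m$l) = (if k = l then 1 else 0))"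
proof -
  define P where "P = (\<lambda>Y::real^'n^'n. (\<forall>k l. (k = j \<or> l = j) \<longrightarrow> Y$k$l = 0) \<and>
      (\<forall>k l. k \<noteq> j \<longrightarrow> l \<noteq> j \<longrightarrow>
         (\<Sum>m\<in>UNIV - {j}. L$k$m * Y$m$l) = (if k = l then 1 else 0) \<and>
         (\<Sum>m\<in>UNIV - {j}. Y$k$m * L$m$l) = (if k = l then 1 else 0)))"
  have YB: "Ybar L j = (THE Y. P Y)" by (simp add: Ybar_def P_def)
  define M' :: "real^'n^'n" where "M' = (\<chi> k l. if k = j \<or> l = j then (if k = l then 1 else 0) else L$k$l)"
  have ker: "\<forall>x. M' *v x = 0 \<longrightarrow> x = 0"
  proof (intro allI impI)
    fix x assume x: "M' *v x = 0"
    have "(M' *v x)$j = (\<Sum>l\<in>UNIV. if j = l then x$l else 0)"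
      unfolding mv_comp by (intro sum.cong refl) (simp add: M'_def)
    then have xj: "x$j = 0" using x by simp
    show "x = 0"
    proof (rule K[OF xj])
      fix k assume "k \<noteq> j"
      have "(L *v x)$k = (M' *v x)$k"
        unfolding mv_comp using xj \<open>k \<noteq> j\<close> by (intro sum.cong refl) (simp add: M'_def)
      then show "(L *v x)$k = 0" using x by simp
    qed
  qed
  then obtain N where N1: "N ** M' = mat 1" using matrix_left_invertible_ker by blast
  then have N2: "M' ** N = mat 1" using matrix_left_right_inverse by blast
  define Y0 :: "real^'n^'n" where "Y0 = (\<chi> k l. if k = j \<or> l = j then 0 else N$k$l)"
  have fin: "finite (UNIV::'n set)" by simp
  have PY0: "P Y0"
    unfolding P_def
  proof (intro conjI allI impI)
    fix k l assume "k = j \<or> l = j" then show "Y0$k$l = 0" by (auto simp: Y0_def)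
  next
    fix k l assume k: "k \<noteq> j" and l: "l \<noteq> j"
    have "(M' ** N)$k$l = M'$k$j * N$j$l + (\<Sum>m\<in>UNIV - {j}. M'$k$m * N$m$l)"
      unfolding matrix_matrix_mult_def by (simp add: sum.remove[OF fin, of j])
    also have "\<dots> = (\<Sum>m\<in>UNIV - {j}. L$k$m * Y0$m$l)"
      using k l by (simp add: M'_def Y0_def)
    finally show "(\<Sum>m\<in>UNIV - {j}. L$k$m * Y0$m$l) = (if k = l then 1 else 0)"
      using N2 by (simp add: mat_def)
    have "(N ** M')$k$l = N$k$j * M'$j$l + (\<Sum>m\<in>UNIV - {j}. N$k$m * M'$m$l)"
      unfolding matrix_matrix_mult_def by (simp add: sum.remove[OF fin, of j])
    also have "\<dots> = (\<Sum>m\<in>UNIV - {j}. Y0$k$m * L$m$l)"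
      using k l by (simp add: M'_def Y0_def)
    finally show "(\<Sum>m\<in>UNIV - {j}. Y0$k$m * L$m$l) = (if k = l then 1 else 0)"
      using N1 by (simp add: mat_def)
  qed
  have uniq: "Y = Y0" if PY: "P Y" for Y
  proof -
    have "Y$k$l = Y0$k$l" for k l
    proof (cases "l = j")
      case True then show ?thesis using PY PY0 unfolding P_def by auto
    next
      case False
      define x where "x = (\<chi> k. Y$k$l - Y0$k$l)"
      have xj: "x$j = 0" using PY PY0 unfolding P_def x_def by auto
      have "x = 0"
      proof (rule K[OF xj])
        fix k assume k: "k \<noteq> j"
        have "(L *v x)$k = L$k$j * x$j + (\<Sum>m\<in>UNIV - {j}. L$k$m * x$m)"
          unfolding mv_comp by (simp add: sum.remove[OF fin, of j])
        also have "\<dots> = (\<Sum>m\<in>UNIV - {j}. L$k$m * Y$m$l) - (\<Sum>m\<in>UNIV - {j}. L$k$m * Y0$m$l)"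
          using xj by (simp add: x_def algebra_simps sum_subtractf)
        also have "\<dots> = 0" using PY PY0 k False unfolding P_def by simp
        finally show "(L *v x)$k = 0" .
      qed
      then show ?thesis unfolding x_def by (metis (no_types, lifting) eq_iff_diff_eq_0 vec_lambda_beta zero_index)
    qed
    then show ?thesis by (simp add: vec_eq_iff)
  qed
  have "\<exists>!Y. P Y" using PY0 uniq by blast
  then have "P (Ybar L j)" unfolding YB by (rule theI')
  then show ?thesis unfolding P_def by blast
qed

lemma col:
  assumes "a \<noteq> b"
  shows "(\<chi> k. Ybar L b $ k $ a)$b = 0"
    and "k \<noteq> b \<Longrightarrow> (L *v (\<chi> k. Ybar L b $ k $ a))$k = (if k = a then 1 else 0)"
    and "(L *v (\<chi> k. Ybar L b $ k $ a))$b = - p$a / p$b"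
proof -
  define u where "u = (\<chi> k. Ybar L b $ k $ a)"
  have fin: "finite (UNIV::'n set)" by simp
  have ub: "u$b = 0" using Ybar_prop[of b] by (simp add: u_def)
  then show "(\<chi> k. Ybar L b $ k $ a)$b = 0" by (simp add: u_def)
  have Lu: "(L *v u)$k = (if k = a then 1 else 0)" if "k \<noteq> b" for k
  proof -
    have "(L *v u)$k = L$k$b * u$b + (\<Sum>m\<in>UNIV - {b}. L$k$m * u$m)"
      unfolding mv_comp by (simp add: sum.remove[OF fin, of b])
    also have "\<dots> = (\<Sum>m\<in>UNIV - {b}. L$k$m * Ybar L b$m$a)" using ub by (simp add: u_def)
    also have "\<dots> = (if k = a then 1 else 0)" using Ybar_prop[of b] that assms by simp
    finally show ?thesis .
  qed
  then show "k \<noteq> b \<Longrightarrow> (L *v (\<chi> k. Ybar L b $ k $ a))$k = (if k = a then 1 else 0)"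
    unfolding u_def by blast
  have "0 = (\<Sum>k\<in>UNIV. p$k * (L *v u)$k)" using pL by simp
  also have "\<dots> = p$b * (L *v u)$b + (\<Sum>k\<in>UNIV - {b}. p$k * (L *v u)$k)"
    by (simp add: sum.remove[OF fin, of b])
  also have "(\<Sum>k\<in>UNIV - {b}. p$k * (L *v u)$k) = (\<Sum>k\<in>UNIV - {b}. if k = a then p$k else 0)"
    using Lu by (intro sum.cong refl) auto
  also have "\<dots> = p$a" using assms by (simp add: sum.delta)
  finally have "p$b * (L *v u)$b = - p$a" by simp
  then show "(L *v (\<chi> k. Ybar L b $ k $ a))$b = - p$a / p$b"
    using pk[of b] unfolding u_def by (simp add: field_simps)
qed
end

theorem lemma11:
  fixes A :: "real^'n^'n" and \<rho> :: real and p :: "real^'n" and i j :: 'n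
  assumes "CARD('n) \<ge> 2"
    and "weighted_multigraph_adj A"
    and "connected_adj A"
    and "\<rho> = spectral_radius A"
    and "\<forall>k. p$k > 0" and "A *v p = \<rho> *\<^sub>R p" and "(\<Sum>k\<in>UNIV. p$k) = 1"
    and "i \<noteq> j"
  shows "\<exists>c > 0. (\<chi> k. Ybar (\<rho> *\<^sub>R mat 1 - A) j $ k $ i * p$j
                     + Ybar (\<rho> *\<^sub>R mat 1 - A) i $ k $ j * p$i) = c *\<^sub>R p"
proof -
  interpret LS A \<rho> p
    using assms(2,3,5,6) by unfold_locales (auto simp: weighted_multigraph_adj_def)
  have LL: "\<rho> *\<^sub>R mat 1 - A = L" by (simp add: L_def)
  define u where "u = (\<chi> k. Ybar L j $ k $ i)"
  define v where "v = (\<chi> k. Ybar L i $ k $ j)"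
  have ij: "i \<noteq> j" "j \<noteq> i" using assms(8) by auto
  note cu = col[OF ij(1), folded u_def]
  note cv = col[OF ij(2), folded v_def]
  define w where "w = (\<chi> k. u$k * p$j + v$k * p$i)"
  have Lw: "(L *v w)$k = p$j * (L *v u)$k + p$i * (L *v v)$k" for k
    unfolding mv_comp w_def by (simp add: distrib_left sum.distrib sum_distrib_left mult_ac)
  have Lw0: "(L *v w)$k = 0" for k
  proof -
    consider "k = i" | "k = j" | "k \<noteq> i" "k \<noteq> j" by blast
    then show ?thesis
    proof cases
      case 1 then show ?thesis using Lw[of k] cu(2)[of k] cv(3) ij pk[of i] by simp
    next
      case 2 then show ?thesis using Lw[of k] cv(2)[of k] cu(3) ij pk[of j] by simp
    qed (use Lw[of k] cu(2)[of k] cv(2)[of k] in simp)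
  qed
  have "Q w = 0" unfolding Q_def by (simp add: Lw0)
  then obtain c where c: "w = c *\<^sub>R p" using Q_zero by blast
  have Qv: "Q v = v$j"
  proof -
    have "Q v = (\<Sum>k\<in>UNIV. if k = j then v$k else 0)"
      unfolding Q_def
    proof (intro sum.cong refl)
      fix k show "v$k * (L *v v)$k = (if k = j then v$k else 0)"
        using cv(1) cv(2)[of k] ij by (cases "k = i") auto
    qed
    then show ?thesis by simp
  qed
  have vj: "v$j > 0"
  proof (rule ccontr)
    assume "\<not> v$j > 0"
    then have "Q v = 0" using Qv Q_nonneg[of v] by simp
    then obtain c' where c': "v = c' *\<^sub>R p" using Q_zero by blast
    then have "c' * p$i = 0" using cv(1) by simp
    then have "c' = 0" using pk[of i] by simp
    then have "v = 0" using c' by simp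
    then show False using cv(2)[of j] ij by simp
  qed
  have "w$j = c * p$j" using c by simp
  moreover have "w$j = v$j * p$i" using cu(1) by (simp add: w_def)
  ultimately have "c * p$j = v$j * p$i" by simp
  then have "c * p$j > 0" using vj pos[of i] by simp
  then have "c > 0" using pos[of j] by (simp add: zero_less_mult_iff)
  moreover have "(\<chi> k. Ybar (\<rho> *\<^sub>R mat 1 - A) j $ k $ i * p$j
                     + Ybar (\<rho> *\<^sub>R mat 1 - A) i $ k $ j * p$i) = w"
    unfolding LL w_def u_def v_def by simp
  ultimately show ?thesis using c by blast
qed

end
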